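(* Let $\phi:\mathbb{C}_0\to\mathbb{C}_0$ be a non-constant analytic function of the form $\phi(s)=c_0s+\varphi(s)$ with $c_0\in\mathbb{N}_0$, $\varphi\in\mathcal{D}$, such that $C_\phi f=f\circ\phi$ maps $\mathcal{A}^+$ into itself. Suppose moreover that $\phi$ has a continuous extension to $\overline{\mathbb{C}_0}=\{\operatorname{Re}s\ge0\}$ which preserves the boundary, i.e. $\phi(i\mathbb{R})\subseteq i\mathbb{R}$. Then $\phi(s)=c_0s+i\tau$ with $c_0\in\mathbb{N}_0$ and $\tau\in\mathbb{R}$.
   Context: $\mathbb{C}_0=\{\operatorname{Re}s>0\}$. $\mathcal{A}^+$ is the Banach algebra of Dirichlet series $f(s)=\sum_{n\ge1}a_nn^{-s}$ with $\|f\|_{\mathcal{A}^+}=\sum|a_n|<\infty$, viewed as functions on $\{\operatorname{Re}s\ge0\}$, with pointwise product. $\mathcal{D}$ is the space of analytic functions on $\mathbb{C}_0$ representable by a convergent Dirichlet series $\sum c_nn^{-s}$ for $\operatorname{Re}s$ large enough. $\mathbb{N}_0=\{0,1,2,\dots\}$. *)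

theory Defs
  imports "HOL-Analysis.Analysis"
begin

definition C0 :: "complex set" where "C0 = {s. 0 < Re s}"
definition C0_closure :: "complex set" where "C0_closure = {s. 0 \<le> Re s}"

text \<open>Dirichlet series sum of coefficients a (the term n = 0 vanishes since 0 powr z = 0),
  i.e. sum over n >= 1 of a n * n^(-s).\<close>
definition dirichlet_series :: "(nat \<Rightarrow> complex) \<Rightarrow> complex \<Rightarrow> complex" where
  "dirichlet_series a s = (\<Sum>n. a n * (of_nat n) powr (- s))"

definition Aplus :: "(complex \<Rightarrow> complex) set" where
  "Aplus = {f. \<exists>a. summable (\<lambda>n. norm (a n)) \<and>
                 (\<forall>s\<in>C0_closure. f s = dirichlet_series a s)}"

definition Dclass :: "(complex \<Rightarrow> complex) set" where
  "Dclass = {g. g holomorphic_on C0 \<and>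
                (\<exists>c \<sigma>. \<forall>s. \<sigma> < Re s \<longrightarrow>
                   (\<lambda>n. c n * (of_nat n) powr (- s)) sums g s)}"

end

theory Submission
  imports Defs "HOL-Complex_Analysis.Complex_Analysis"
begin


definition ee :: "real \<Rightarrow> complex" where "ee t = exp (2 * of_real pi * \<i> * of_real t)"

lemma ee_cnj: "ee t * cnj (ee t) = 1"
proof -
  have "cnj (ee t) = exp (- (2 * of_real pi * \<i> * of_real t))"
    by (simp add: ee_def exp_cnj)
  then show ?thesis by (simp add: ee_def flip: exp_add)
qed

lemma circ_eq: "circlepath 0 R t = of_real R * ee t"
  by (simp add: circlepath ee_def)

lemma coeff1:
  fixes F :: "complex \<Rightarrow> complex"
  fixes R :: real
  assumes hol: "F holomorphic_on UNIV" and R: "R > 0"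
  shows "((\<lambda>t. F (of_real R * ee t) * cnj (ee t) ^ n) has_integral ((deriv^^n) F 0 / fact n * of_real R^n)) {0..1}"
proof -
  have "((\<lambda>u. F u / (u-0) ^ (Suc n)) has_contour_integral ((2 * pi * \<i>) / (fact n) * (deriv ^^ n) F 0)) (circlepath 0 R)"
    by (rule Cauchy_has_contour_integral_higher_derivative_circlepath)
       (use hol R in \<open>auto intro: holomorphic_on_imp_continuous_on holomorphic_on_subset\<close>)
  then have I: "((\<lambda>x. F (of_real R * ee x) / (of_real R * ee x) ^ Suc n * (2 * pi * \<i> * of_real R * ee x)) has_integral ((2 * pi * \<i>) / (fact n) * (deriv ^^ n) F 0)) {0..1}"
    unfolding has_contour_integral_def
    by (rule has_integral_eq[rotated]) (simp add: vector_derivative_circlepath01 circ_eq ee_def)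
  have eq: "F (of_real R * ee x) / (of_real R * ee x) ^ Suc n * (2 * pi * \<i> * of_real R * ee x) = (2 * pi * \<i> / of_real R^n) * (F (of_real R * ee x) * cnj (ee x) ^ n)" for x
  proof -
    have ne: "ee x \<noteq> 0" by (simp add: ee_def)
    have "cnj (ee x) = 1 / ee x" using ee_cnj[of x] ne by (simp add: field_simps)
    then show ?thesis using ne R ee_cnj[of x] by (simp add: field_simps power_divide flip: power_mult_distrib)
  qed
  define c where "c = (of_real R^n / (2 * pi * \<i>) :: complex)"
  have cne: "(2 * pi * \<i> / of_real R^n) \<noteq> (0::complex)" using R by simp
  have A: "((\<lambda>x. c * ((2 * pi * \<i> / of_real R^n) * (F (of_real R * ee x) * cnj (ee x) ^ n))) has_integral c * ((2 * pi * \<i>) / (fact n) * (deriv ^^ n) F 0)) {0..1}"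
    using has_integral_mult_right[OF I[unfolded eq]] by simp
  have E1: "\<And>x. c * ((2 * pi * \<i> / of_real R^n) * (F (of_real R * ee x) * cnj (ee x) ^ n)) = F (of_real R * ee x) * cnj (ee x) ^ n"
    using R by (simp add: c_def field_simps)
  have E2: "c * ((2 * pi * \<i>) / (fact n) * (deriv ^^ n) F 0) = (deriv^^n) F 0 / fact n * of_real R^n"
    using R by (simp add: c_def field_simps)
  show ?thesis using A unfolding E1 E2 .
qed

lemma coeff2:
  fixes F :: "complex \<Rightarrow> complex"
  fixes R :: real
  assumes hol: "F holomorphic_on UNIV" and R: "R > 0" and n: "n \<ge> 1"
  shows "((\<lambda>t. F (of_real R * ee t) * ee t ^ n) has_integral 0) {0..1}"
proof -
  have "((\<lambda>u. F u * u ^ (n - 1)) has_contour_integral 0) (circlepath 0 R)"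
    by (rule Cauchy_theorem_disc_simple[where a=0 and e="R+1"])
       (use hol R in \<open>auto intro!: holomorphic_intros intro: holomorphic_on_subset\<close>)
  then have I: "((\<lambda>x. F (of_real R * ee x) * (of_real R * ee x) ^ (n - 1) * (2 * pi * \<i> * of_real R * ee x)) has_integral 0) {0..1}"
    unfolding has_contour_integral_def
    by (rule has_integral_eq[rotated]) (simp add: vector_derivative_circlepath01 circ_eq ee_def)
  have eq: "F (of_real R * ee x) * (of_real R * ee x) ^ (n - 1) * (2 * pi * \<i> * of_real R * ee x) = (2 * pi * \<i> * of_real R^n) * (F (of_real R * ee x) * ee x ^ n)" for x
  proof -
    obtain m where m: "n = Suc m" using n by (cases n) auto
    show ?thesis by (simp add: m field_simps)
  qed
  have "((\<lambda>x. (1 / (2 * pi * \<i> * of_real R^n)) * ((2 * pi * \<i> * of_real R^n) * (F (of_real R * ee x) * ee x ^ n))) has_integral 0) {0..1}"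
    using has_integral_mult_right[OF I[unfolded eq], of "1 / (2 * pi * \<i> * of_real R^n)"] by simp
  then show ?thesis using R by simp
qed

lemma coeffU:
  fixes F :: "complex \<Rightarrow> complex" and R :: real
  assumes hol: "F holomorphic_on UNIV" and R: "R > 0" and n: "n \<ge> 1"
    and dsym: "cnj ((deriv^^n) F 0) = - ((-1)^n * (deriv^^n) F 0)"
  shows "((\<lambda>t. of_real (Re (F (of_real R * ee t))) * cnj (ee t) ^ n
            - (-1)^n * cnj (of_real (Re (F (of_real R * ee t))) * cnj (ee t) ^ n))
          has_integral ((deriv^^n) F 0 / fact n * of_real R^n)) {0..1}"
proof -
  define d where "d = (deriv^^n) F 0 / fact n * of_real R^n"
  define p where "p t = of_real (Re (F (of_real R * ee t))) * cnj (ee t) ^ n" for t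
  have H1: "((\<lambda>t. F (of_real R * ee t) * cnj (ee t) ^ n) has_integral d) {0..1}"
    using coeff1[OF hol R, of n] by (simp add: d_def)
  have H2: "((\<lambda>t. cnj (F (of_real R * ee t) * ee t ^ n)) has_integral 0) {0..1}"
    using coeff2[OF hol R n] has_integral_cnj[of "\<lambda>t. F (of_real R * ee t) * ee t ^ n" 0 "{0..1}"]
    by (simp add: comp_def)
  have Hp0: "((\<lambda>t. (F (of_real R * ee t) * cnj (ee t) ^ n + cnj (F (of_real R * ee t) * ee t ^ n)) / 2) has_integral d / 2) {0..1}"
    using has_integral_divide[OF has_integral_add[OF H1 H2], of 2] by simp
  have peq: "p t = (F (of_real R * ee t) * cnj (ee t) ^ n + cnj (F (of_real R * ee t) * ee t ^ n)) / 2" for t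
  proof -
    have "of_real (Re (F (of_real R * ee t))) = (F (of_real R * ee t) + cnj (F (of_real R * ee t))) / 2"
      using complex_add_cnj[of "F (of_real R * ee t)"] by simp
    then have "p t = cnj (ee t) ^ n * ((F (of_real R * ee t) + cnj (F (of_real R * ee t))) / 2)"
      unfolding p_def by (simp add: mult.commute)
    then show ?thesis by (simp add: algebra_simps add_divide_distrib)
  qed
  have Hp: "(p has_integral d / 2) {0..1}"
    using Hp0 by (simp add: peq[abs_def])
  have Hc: "((\<lambda>t. (-1)^n * cnj (p t)) has_integral (-1)^n * cnj (d / 2)) {0..1}"
    using has_integral_mult_right[OF Hp[THEN has_integral_cnj[THEN iffD2]]] by (simp add: comp_def)
  have "cnj d = - ((-1)^n * d)"
    using dsym by (simp add: d_def)
  then have val: "d / 2 - (-1)^n * cnj (d / 2) = d"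
    by (simp add: field_simps flip: power_add)
  show ?thesis
    using has_integral_diff[OF Hp Hc] unfolding val by (simp add: p_def d_def)
qed



lemma sin_mult_le: "\<bar>sin (real n * x)\<bar> \<le> real n * \<bar>sin x\<bar>"
proof (induction n)
  case 0 then show ?case by simp
next
  case (Suc n)
  have "sin (real (Suc n) * x) = sin (real n * x) * cos x + cos (real n * x) * sin x"
    by (simp add: distrib_right sin_add)
  then have "\<bar>sin (real (Suc n) * x)\<bar> \<le> \<bar>sin (real n * x)\<bar> * \<bar>cos x\<bar> + \<bar>cos (real n * x)\<bar> * \<bar>sin x\<bar>"
    by (simp add: abs_mult[symmetric] abs_triangle_ineq)
  also have "\<dots> \<le> \<bar>sin (real n * x)\<bar> + \<bar>sin x\<bar>"
    by (intro add_mono mult_left_le mult_left_le_one_le) (auto simp: abs_cos_le_one abs_sin_le_one)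
  finally show ?case using Suc.IH by (simp add: distrib_right)
qed

lemma key_trig: "norm (cis (-(real n * \<theta>)) - (-1)^n * cis (real n * \<theta>)) \<le> 2 * real n * \<bar>cos \<theta>\<bar>"
proof -
  have S: "\<bar>sin (real n * (\<theta> + pi/2))\<bar> \<le> real n * \<bar>cos \<theta>\<bar>"
    using sin_mult_le[of n "\<theta> + pi/2"] by (simp add: sin_add)
  show ?thesis
  proof (cases "even n")
    case True
    then obtain m where m: "n = 2 * m" by blast
    have e: "real n * (\<theta> + pi/2) = real n * \<theta> + real m * pi" by (simp add: m algebra_simps)
    have "\<bar>sin (real n * (\<theta> + pi/2))\<bar> = \<bar>sin (real n * \<theta>)\<bar>"
      unfolding e by (simp add: sin_add abs_mult)
    moreover have "cis (-(real n * \<theta>)) - (-1)^n * cis (real n * \<theta>) = - (2 * \<i> * of_real (sin (real n * \<theta>)))"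
      using True by (simp add: complex_eq_iff cis.sel)
    ultimately show ?thesis using S by (simp add: norm_mult)
  next
    case False
    then obtain m where m: "n = 2 * m + 1" using oddE by blast
    have e: "real n * (\<theta> + pi/2) = (real n * \<theta> + real m * pi) + pi/2" by (simp add: m algebra_simps)
    have "\<bar>sin (real n * (\<theta> + pi/2))\<bar> = \<bar>cos (real n * \<theta>)\<bar>"
      unfolding e by (simp add: sin_add cos_add abs_mult)
    moreover have "cis (-(real n * \<theta>)) - (-1)^n * cis (real n * \<theta>) = 2 * of_real (cos (real n * \<theta>))"
      using False by (simp add: complex_eq_iff cis.sel)
    ultimately show ?thesis using S by (simp add: norm_mult)
  qed
qed

lemma ptwise:
  fixes U \<theta> :: real
  assumes "U * cos \<theta> \<ge> 0"
  shows "norm (of_real U * cnj (cis \<theta>) ^ n - (-1)^n * cnj (of_real U * cnj (cis \<theta>) ^ n))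
     \<le> Re (of_nat n * (of_real U * cnj (cis \<theta>) ^ 1 - (-1)^1 * cnj (of_real U * cnj (cis \<theta>) ^ 1)))"
proof -
  have L: "of_real U * cnj (cis \<theta>) ^ n - (-1)^n * cnj (of_real U * cnj (cis \<theta>) ^ n)
     = of_real U * (cis (-(real n * \<theta>)) - (-1)^n * cis (real n * \<theta>))"
  proof -
    have c: "cnj (cis \<theta>) = cis (-\<theta>)" by (simp add: complex_eq_iff)
    have "cnj (cis \<theta>) ^ n = cis (-(real n * \<theta>))" unfolding c using Complex.DeMoivre[of "-\<theta>" n] by (simp only: mult_minus_right)
    moreover have "cis \<theta> ^ n = cis (real n * \<theta>)" by (simp add: Complex.DeMoivre)
    ultimately show ?thesis by (simp add: algebra_simps complex_eq_iff)
  qed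
  have R: "Re (of_nat n * (of_real U * cnj (cis \<theta>) ^ 1 - (-1)^1 * cnj (of_real U * cnj (cis \<theta>) ^ 1))) = 2 * real n * (U * cos \<theta>)"
    by (simp add: algebra_simps)
  have "norm (of_real U * (cis (-(real n * \<theta>)) - (-1)^n * cis (real n * \<theta>))) \<le> \<bar>U\<bar> * (2 * real n * \<bar>cos \<theta>\<bar>)"
    by (simp add: norm_mult key_trig mult_left_mono)
  also have "\<dots> = 2 * real n * \<bar>U * cos \<theta>\<bar>" by (simp add: abs_mult)
  also have "\<dots> = 2 * real n * (U * cos \<theta>)" using assms by simp
  finally show ?thesis unfolding L R .
qed


lemma ee_cis: "ee t = cis (2 * pi * t)"
  by (simp add: ee_def cis_conv_exp mult_ac)

lemma coeff_bound:
  fixes F :: "complex \<Rightarrow> complex" and R :: real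
  assumes hol: "F holomorphic_on UNIV" and R: "R > 0" and n: "n \<ge> 1"
    and dsym: "\<And>k. cnj ((deriv^^k) F 0) = - ((-1)^k * (deriv^^k) F 0)"
    and sgn: "\<And>z. 0 \<le> Re z * Re (F z)"
  shows "norm ((deriv^^n) F 0 / fact n) * R^n \<le> real n * norm ((deriv^^1) F 0 / fact 1) * R"
proof -
  define p where "p k t = of_real (Re (F (of_real R * ee t))) * cnj (ee t) ^ k" for k t
  have If: "((\<lambda>t. p n t - (-1)^n * cnj (p n t)) has_integral ((deriv^^n) F 0 / fact n * of_real R^n)) {0..1}"
    using coeffU[OF hol R n dsym] unfolding p_def .
  have I1: "((\<lambda>t. p 1 t - (-1)^1 * cnj (p 1 t)) has_integral ((deriv^^1) F 0 / fact 1 * of_real R^1)) {0..1}"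
    using coeffU[OF hol R _ dsym, of 1] unfolding p_def by simp
  have Ig: "((\<lambda>t. of_nat n * (p 1 t - (-1)^1 * cnj (p 1 t))) has_integral of_nat n * ((deriv^^1) F 0 / fact 1 * of_real R^1)) {0..1}"
    using has_integral_mult_right[OF I1] .
  have "norm (integral {0..1} (\<lambda>t. p n t - (-1)^n * cnj (p n t))) \<le> integral {0..1} (\<lambda>t. of_nat n * (p 1 t - (-1)^1 * cnj (p 1 t))) \<bullet> 1"
  proof (rule integral_norm_bound_integral_component)
    show "(\<lambda>t. p n t - (-1)^n * cnj (p n t)) integrable_on {0..1}" using If by blast
    show "(\<lambda>t. of_nat n * (p 1 t - (-1)^1 * cnj (p 1 t))) integrable_on {0..1}" using Ig by blast
    fix t :: real
    define U where "U = Re (F (of_real R * ee t))"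
    have "0 \<le> Re (of_real R * ee t) * U" using sgn unfolding U_def .
    then have "0 \<le> R * (U * cos (2 * pi * t))" by (simp add: ee_cis mult_ac)
    then have s: "0 \<le> U * cos (2 * pi * t)" using R by (simp add: zero_le_mult_iff)
    show "norm (p n t - (-1)^n * cnj (p n t)) \<le> (of_nat n * (p 1 t - (-1)^1 * cnj (p 1 t))) \<bullet> 1"
      using ptwise[OF s, of n] unfolding p_def U_def ee_cis by simp
  qed
  then have "norm ((deriv^^n) F 0 / fact n * of_real R^n) \<le> Re (of_nat n * ((deriv^^1) F 0 / fact 1 * of_real R^1))"
    unfolding integral_unique[OF If] integral_unique[OF Ig] complex_inner_1_right .
  also have "\<dots> \<le> norm (of_nat n * ((deriv^^1) F 0 / fact 1 * of_real R^1))" by (rule complex_Re_le_cmod)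
  finally show ?thesis using R by (simp add: norm_mult norm_power norm_divide mult_ac)
qed


lemma deriv_refl:
  fixes g :: "complex \<Rightarrow> complex"
  assumes hol: "g holomorphic_on UNIV"
  shows "(deriv^^k) (\<lambda>z. c * cnj (g (- cnj z))) = (\<lambda>z. c * (-1)^k * cnj ((deriv^^k) g (- cnj z)))"
proof (induction k)
  case 0 then show ?case by simp
next
  case (Suc k)
  define h where "h = (deriv^^k) g"
  have holh: "h holomorphic_on UNIV" unfolding h_def using hol by (rule holomorphic_higher_deriv) simp
  have D: "((\<lambda>z. c * (-1)^k * cnj (h (- cnj z))) has_field_derivative c * (-1)^k * (- cnj (deriv h (- cnj z)))) (at z)" for z
  proof -
    have "((\<lambda>w. h (- w)) has_field_derivative (deriv h (- cnj z) * (-1))) (at (cnj z))"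
    proof -
      have "(h has_field_derivative deriv h (- cnj z)) (at (- cnj z))"
        using holh by (auto intro: holomorphic_derivI[where S=UNIV])
      moreover have "((\<lambda>w. - w) has_field_derivative -1) (at (cnj z))" by (auto intro!: derivative_eq_intros)
      ultimately show ?thesis by (rule DERIV_chain2)
    qed
    from has_field_derivative_cnj_cnj[OF this]
    have "((\<lambda>z. cnj (h (- cnj z))) has_field_derivative cnj (deriv h (- cnj z) * (-1))) (at z)"
      by (simp add: comp_def)
    then show ?thesis by (auto intro!: derivative_eq_intros)
  qed
  have "(deriv^^Suc k) (\<lambda>z. c * cnj (g (- cnj z))) = deriv (\<lambda>z. c * (-1)^k * cnj (h (- cnj z)))"
    using Suc by (simp add: h_def)
  also have "\<dots> = (\<lambda>z. c * (-1)^k * (- cnj (deriv h (- cnj z))))"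
    using D by (intro ext DERIV_imp_deriv)
  also have "\<dots> = (\<lambda>z. c * (-1)^Suc k * cnj ((deriv^^Suc k) g (- cnj z)))"
    by (simp add: h_def)
  finally show ?case .
qed

lemma dsym:
  fixes F :: "complex \<Rightarrow> complex"
  assumes hol: "F holomorphic_on UNIV" and sym: "\<And>z. F (- cnj z) = - cnj (F z)"
  shows "cnj ((deriv^^k) F 0) = - ((-1)^k * (deriv^^k) F 0)"
proof -
  have "F = (\<lambda>z. (-1) * cnj (F (- cnj z)))"
  proof
    fix z show "F z = (-1) * cnj (F (- cnj z))" using sym[of "- cnj z"] by simp
  qed
  then have "(deriv^^k) F 0 = (deriv^^k) (\<lambda>z. (-1) * cnj (F (- cnj z))) 0" by simp
  also have "\<dots> = (-1) * (-1)^k * cnj ((deriv^^k) F 0)"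
    by (subst deriv_refl[OF hol]) simp
  finally have "(deriv^^k) F 0 = (-1) * (-1)^k * cnj ((deriv^^k) F 0)" .
  then have "cnj ((deriv^^k) F 0) = (-1) * (-1)^k * (deriv^^k) F 0"
    by (metis complex_cnj_cnj complex_cnj_minus complex_cnj_mult complex_cnj_one complex_cnj_power)
  then show ?thesis by simp
qed

lemma linear_entire:
  fixes F :: "complex \<Rightarrow> complex"
  assumes hol: "F holomorphic_on UNIV" and sym: "\<And>z. F (- cnj z) = - cnj (F z)"
    and sgn: "\<And>z. 0 \<le> Re z * Re (F z)"
  shows "F z = F 0 + deriv F 0 * z"
proof -
  have zero: "(deriv^^n) F 0 = 0" if n: "n \<ge> 2" for n
  proof (rule ccontr)
    assume ne: "(deriv^^n) F 0 \<noteq> 0"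
    define a where "a = norm ((deriv^^n) F 0 / fact n)"
    define b where "b = norm ((deriv^^1) F 0 / fact 1)"
    have a: "a > 0" using ne by (simp add: a_def)
    define R where "R = (real n * b + 1) / a + 1"
    have "0 \<le> real n * b" by (simp add: b_def)
    then have R1: "R > 1" unfolding R_def using a by simp
    have B: "a * R^n \<le> real n * b * R"
      using coeff_bound[OF hol _ _ dsym[OF hol sym] sgn, of R n] R1 n by (simp add: a_def b_def)
    have "R * R \<le> R^n"
    proof -
      have "R^2 \<le> R^n" using R1 n by (intro power_increasing) auto
      then show ?thesis by (simp add: power2_eq_square)
    qed
    then have "a * (R * R) \<le> real n * b * R" using B a by (meson mult_left_mono less_imp_le order_trans)
    then have "a * R \<le> real n * b" using R1 by (simp add: mult.assoc[symmetric])
    moreover have "a * R > real n * b"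
    proof -
      have "a * R = real n * b + 1 + a" unfolding R_def using a by (simp add: field_simps)
      then show ?thesis using a by simp
    qed
    ultimately show False by simp
  qed
  have "(\<lambda>n. (deriv ^^ n) F 0 / fact n * (z - 0)^n) sums F z"
    by (rule holomorphic_power_series[where r = "norm z + 1"]) (use hol in \<open>auto intro: holomorphic_on_subset\<close>)
  moreover have "(\<lambda>n. (deriv ^^ n) F 0 / fact n * (z - 0)^n) sums (\<Sum>n<2. (deriv ^^ n) F 0 / fact n * (z - 0)^n)"
    by (rule sums_finite) (auto simp: zero)
  ultimately have "F z = (\<Sum>n<2. (deriv ^^ n) F 0 / fact n * (z - 0)^n)" using sums_unique2 by blast
  then show ?thesis by (simp add: numeral_2_eq_2)
qed


lemma dirichlet_linear:
  fixes c :: "nat \<Rightarrow> complex" and A B :: complex and \<sigma> :: real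
  assumes S: "\<And>x::real. \<sigma> < x \<Longrightarrow> (\<lambda>n. c n * (of_nat n) powr (- of_real x)) sums (A + B * of_real x)"
  shows "B = 0"
proof -
  define x0 where "x0 = max \<sigma> 0 + 1"
  have x0: "\<sigma> < x0" "0 < x0" by (auto simp: x0_def)
  have "(\<lambda>n. c n * (of_nat n) powr (- of_real x0)) \<longlonglongrightarrow> 0"
    using S[OF x0(1)] by (intro summable_LIMSEQ_zero) (auto simp: sums_iff)
  then have "Bseq (\<lambda>n. c n * (of_nat n) powr (- of_real x0))" by (rule convergent_imp_Bseq[OF convergentI])
  then obtain M where M: "M > 0" "\<And>n. norm (c n * (of_nat n) powr (- of_real x0)) \<le> M"
    by (auto elim: BseqE)
  define K where "K = M * (\<Sum>n. real n powr (-2))"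
  have sg: "summable (\<lambda>n. M * real n powr (-2))"
    using summable_real_powr_iff[of "-2"] by (intro summable_mult) simp
  have bnd: "norm (A + B * of_real x) \<le> K" if x: "x0 + 2 \<le> x" for x
  proof -
    have tb: "norm (c n * (of_nat n) powr (- of_real x)) \<le> M * real n powr (-2)" for n
    proof (cases "n = 0")
      case True then show ?thesis by simp
    next
      case False
      have e1: "norm ((of_nat n :: complex) powr (- of_real y)) = real n powr (- y)" for y
        by (subst norm_powr_real_powr) auto
      have "real n powr (- x) = real n powr (- x0) * real n powr (- (x - x0))"
        by (simp flip: powr_add)
      also have "\<dots> \<le> real n powr (- x0) * real n powr (-2)"
        using False x by (intro mult_left_mono powr_mono) auto
      finally have "norm (c n) * real n powr (- x) \<le> (norm (c n) * real n powr (- x0)) * real n powr (-2)"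
        by (simp add: mult_left_mono mult.assoc)
      also have "\<dots> \<le> M * real n powr (-2)"
        using M(2)[of n] by (intro mult_right_mono) (auto simp: norm_mult e1)
      finally show ?thesis by (simp add: norm_mult e1)
    qed
    have sn: "summable (\<lambda>n. norm (c n * (of_nat n) powr (- of_real x)))"
      using tb sg by (intro summable_comparison_test[OF _ sg]) auto
    have "A + B * of_real x = (\<Sum>n. c n * (of_nat n) powr (- of_real x))"
      using S[of x] x x0 by (simp add: sums_iff)
    then have "norm (A + B * of_real x) \<le> (\<Sum>n. norm (c n * (of_nat n) powr (- of_real x)))"
      using summable_norm[OF sn] by simp
    also have "\<dots> \<le> (\<Sum>n. M * real n powr (-2))"
      by (intro suminf_le sn sg tb)
    also have "\<dots> = K" unfolding K_def
      using summable_real_powr_iff[of "-2"] by (simp add: suminf_mult)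
    finally show ?thesis .
  qed
  show "B = 0"
  proof (rule ccontr)
    assume B: "B \<noteq> 0"
    define x where "x = x0 + 2 + (K + norm A + 1) / norm B"
    have K0: "0 \<le> K" using bnd[of "x0 + 2"] by (meson norm_ge_zero order_trans order_refl)
    have xx: "x0 + 2 \<le> x" unfolding x_def using B K0 by (simp add: add_nonneg_nonneg)
    have "norm B * x \<le> norm (A + B * of_real x) + norm A"
    proof -
      have "norm (B * of_real x) \<le> norm (A + B * of_real x) + norm A"
        by (metis add_diff_cancel_left' norm_diff_ineq norm_minus_commute diff_le_eq add.commute)
      then show ?thesis using xx x0 by (simp add: norm_mult)
    qed
    also have "\<dots> \<le> K + norm A" using bnd[OF xx] by simp
    finally have "norm B * x \<le> K + norm A" .
    moreover have "norm B * x \<ge> K + norm A + 1"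
    proof -
      have "norm B * x = norm B * (x0 + 2) + (K + norm A + 1)" unfolding x_def using B by (simp add: field_simps)
      moreover have "norm B * (x0 + 2) \<ge> 0" using x0 by simp
      ultimately show ?thesis by linarith
    qed
    ultimately show False by simp
  qed
qed



lemma reflect_ext:
  fixes \<phi> :: "complex \<Rightarrow> complex"
  assumes holo: "\<phi> holomorphic_on C0"
    and cont: "continuous_on C0_closure \<phi>"
    and bdry: "\<forall>t::real. Re (\<phi> (\<i> * of_real t)) = 0"
  obtains F where "F holomorphic_on UNIV" "\<And>z. 0 \<le> Re z \<Longrightarrow> F z = \<phi> z"
    "\<And>z. F (- cnj z) = - cnj (F z)"
proof -
  define f where "f w = \<i> * \<phi> (- \<i> * w)" for w
  define G where "G = (\<lambda>z. if 0 \<le> Im z then f z else cnj (f (cnj z)))"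
  have "G holomorphic_on UNIV"
    unfolding G_def
  proof (rule Schwarz_reflection)
    show "f holomorphic_on (UNIV \<inter> {z. 0 < Im z})"
      unfolding f_def
      by (intro holomorphic_intros holomorphic_on_compose_gen[OF _ holo, unfolded comp_def])
         (auto simp: C0_def)
    show "continuous_on (UNIV \<inter> {z. 0 \<le> Im z}) f"
      unfolding f_def
      by (intro continuous_intros continuous_on_compose2[OF cont]) (auto simp: C0_closure_def)
    show "f z \<in> \<real>" if zr: "z \<in> \<real>" for z
    proof -
      obtain t where t: "z = of_real t" using zr unfolding Reals_def by blast
      have "Re (\<phi> (\<i> * of_real (- t))) = 0" using bdry by blast
      then show ?thesis by (simp add: f_def t complex_is_Real_iff)
    qed
  qed auto
  define F where "F z = - \<i> * G (\<i> * z)" for z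
  have Feq: "F z = (if 0 \<le> Re z then \<phi> z else - cnj (\<phi> (- cnj z)))" for z
    by (simp add: F_def G_def f_def)
  show ?thesis
  proof
    show "F holomorphic_on UNIV" unfolding F_def
      by (intro holomorphic_intros holomorphic_on_compose_gen[OF _ \<open>G holomorphic_on UNIV\<close>, unfolded comp_def]) auto
    show "F z = \<phi> z" if "0 \<le> Re z" for z using that Feq by simp
    show "F (- cnj z) = - cnj (F z)" for z
    proof (cases "Re z = 0")
      case True
      then have z: "z = \<i> * of_real (Im z)" by (simp add: complex_eq_iff)
      have "Re (\<phi> z) = 0" using bdry z by metis
      then have p: "- cnj (\<phi> z) = \<phi> z" by (simp add: complex_eq_iff)
      have e: "- cnj z = z" using True by (simp add: complex_eq_iff)
      have Fz: "F z = \<phi> z" using Feq[of z] True by simp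
      show ?thesis by (metis e p Fz)
    qed (auto simp: Feq)
  qed
qed


theorem theorem24:
  fixes \<phi> \<psi> :: "complex \<Rightarrow> complex" and c0 :: nat
  assumes holo: "\<phi> holomorphic_on C0"
    and maps: "\<phi> ` C0 \<subseteq> C0"
    and nonconst: "\<not> (\<exists>c. \<forall>s\<in>C0. \<phi> s = c)"
    and form: "\<forall>s\<in>C0. \<phi> s = of_nat c0 * s + \<psi> s"
    and psiD: "\<psi> \<in> Dclass"
    and comp: "\<forall>f\<in>Aplus. \<exists>g\<in>Aplus. \<forall>s\<in>C0. f (\<phi> s) = g s"
    and cont: "continuous_on C0_closure \<phi>"
    and bdry: "\<forall>t::real. Re (\<phi> (\<i> * of_real t)) = 0"
  shows "\<exists>\<tau>::real. \<forall>s\<in>C0. \<phi> s = of_nat c0 * s + \<i> * of_real \<tau>"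
proof -
  obtain F where hol: "F holomorphic_on UNIV" and Fphi: "\<And>z. 0 \<le> Re z \<Longrightarrow> F z = \<phi> z"
    and sym: "\<And>z. F (- cnj z) = - cnj (F z)"
    using reflect_ext[OF holo cont bdry] by blast
  have pos: "0 < Re (F z)" if "0 < Re z" for z
  proof -
    have "z \<in> C0" using that by (simp add: C0_def)
    then have "\<phi> z \<in> C0" using maps by blast
    then show ?thesis using Fphi[of z] that by (simp add: C0_def)
  qed
  have sgn: "0 \<le> Re z * Re (F z)" for z
  proof (cases "Re z" "0::real" rule: linorder_cases)
    case greater then show ?thesis using pos[of z] by simp
  next
    case equal then show ?thesis by simp
  next
    case less
    have "F z = - cnj (F (- cnj z))" using sym[of "- cnj z"] by simp
    then have "Re (F z) = - Re (F (- cnj z))" by simp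
    moreover have "0 < Re (F (- cnj z))" using pos[of "- cnj z"] less by simp
    ultimately show ?thesis using less by (simp add: mult_neg_pos less_imp_le)
  qed
  have lin: "F z = F 0 + deriv F 0 * z" for z
    by (rule linear_entire[OF hol sym sgn])
  from psiD obtain c \<sigma> where cs: "\<And>s. \<sigma> < Re s \<Longrightarrow> (\<lambda>n. c n * (of_nat n) powr (- s)) sums \<psi> s"
    unfolding Dclass_def by blast
  have "deriv F 0 - of_nat c0 = 0"
  proof (rule dirichlet_linear[where c=c and A="F 0" and \<sigma>="max \<sigma> 0"])
    fix x :: real assume x: "max \<sigma> 0 < x"
    have xC: "of_real x \<in> C0" using x by (simp add: C0_def)
    have "\<psi> (of_real x) = \<phi> (of_real x) - of_nat c0 * of_real x" using form xC by simp
    also have "\<dots> = F 0 + (deriv F 0 - of_nat c0) * of_real x"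
      using Fphi[of "of_real x"] lin[of "of_real x"] x by (simp add: algebra_simps)
    finally show "(\<lambda>n. c n * (of_nat n) powr (- of_real x)) sums (F 0 + (deriv F 0 - of_nat c0) * of_real x)"
      using cs[of "of_real x"] x by simp
  qed
  then have a1: "deriv F 0 = of_nat c0" by simp
  have "Re (F 0) = 0" using Fphi[of 0] bdry[rule_format, of 0] by simp
  then have F0: "F 0 = \<i> * of_real (Im (F 0))" by (simp add: complex_eq_iff)
  show ?thesis
  proof (intro exI ballI)
    fix s assume "s \<in> C0"
    then have "0 \<le> Re s" by (simp add: C0_def)
    then have "\<phi> s = F 0 + deriv F 0 * s" using Fphi lin by metis
    then show "\<phi> s = of_nat c0 * s + \<i> * of_real (Im (F 0))" using a1 F0 by (simp add: algebra_simps)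
  qed
qed

end
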